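(* Let $\mathbb{F}$ be an algebraically closed field of characteristic $0$, $D$ an $\mathbb{F}$-vector space with $\dim D=3$, and $\Gamma\subseteq D^{\ast}$ an additive subgroup with $\Gamma\simeq\mathbb{Z}^3$ and $\bigcap_{\alpha\in\Gamma}\ker\alpha=\{0\}$. Let $M=\bigoplus_{\theta\in\Gamma}M_\theta$ be a $\Gamma$-graded $\mathcal{S}(\Gamma,D)$-module with $\dim M_\theta=1$, $M_\theta=\mathbb{F}w_\theta$. Let $\sigma,\rho\in\Gamma$ be $\mathbb{Z}$-linearly independent, let $\tilde\partial_1$ be a nonzero vector of the one-dimensional space $\ker\sigma\cap\ker\rho$, $\tilde\partial_2\in\ker\sigma\setminus\mathbb{F}\tilde\partial_1$ and $\tilde\partial_3\in\ker\rho\setminus\mathbb{F}\tilde\partial_1$. Suppose that for some $\nu\in\Gamma$, $x^{-\sigma}\tilde\partial_1.x^{\sigma}\tilde\partial_1.w_\nu\neq0$ and $x^{-\rho}\tilde\partial_1.x^{\rho}\tilde\partial_1.w_\nu\neq0$. Let $a_1,b_1$ be any nonzero scalars with $x^{-\sigma}\tilde\partial_1.x^{\sigma}\tilde\partial_1.w_\nu=a_1^2w_\nu$ and $x^{-\rho}\tilde\partial_1.x^{\rho}\tilde\partial_1.w_\nu=b_1^2w_\nu$. Then there exist nonzero $v_{\nu+i\sigma+k\rho}\in M_{\nu+i\sigma+k\rho}$ ($i,k\in\mathbb{Z}$) such that $x^{\pm\sigma}\tilde\partial_1.v_{\nu+i\sigma+k\rho}=a_1v_{\nu+(i\pm1)\sigma+k\rho}$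 and $x^{\pm\rho}\tilde\partial_1.v_{\nu+i\sigma+k\rho}=b_1v_{\nu+i\sigma+(k\pm1)\rho}$ for all $i,k\in\mathbb{Z}$. Moreover, for any such family, writing $x^{\sigma}\tilde\partial_2.v_\nu=a_2v_{\nu+\sigma}$, $x^{\rho}\tilde\partial_3.v_\nu=a_3v_{\nu+\rho}$ and $x^{\sigma+\rho}\tilde\partial_1.v_\nu=dv_{\nu+\sigma+\rho}$, one has for all $i,k\in\mathbb{Z}$: $x^{\sigma+\rho}\tilde\partial_1.v_{\nu+i\sigma+k\rho}=dv_{\nu+(i+1)\sigma+(k+1)\rho}$, $x^{\pm\sigma}\tilde\partial_2.v_{\nu+i\sigma+k\rho}=\big(a_2+k\rho(\tilde\partial_2)\tfrac{d}{b_1}\big)v_{\nu+(i\pm1)\sigma+k\rho}$, $x^{\pm\rho}\tilde\partial_3.v_{\nu+i\sigma+k\rho}=\big(a_3+i\sigma(\tilde\partial_3)\tfrac{d}{a_1}\big)v_{\nu+i\sigma+(k\pm1)\rho}$, and $a_1^2=b_1^2=d^2$.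
   Context: $\mathcal{S}(\Gamma,D)$ is the Lie algebra spanned by $x^\alpha\partial$ with $\alpha\in\Gamma\setminus\{0\}$, $\partial\in\ker\alpha$ (linear in $\partial$), with bracket $[x^\alpha\partial_1,x^\beta\partial_2]=x^{\alpha+\beta}(\beta(\partial_1)\partial_2-\alpha(\partial_2)\partial_1)$. A $\Gamma$-graded module satisfies $x^\alpha\partial.M_\theta\subseteq M_{\alpha+\theta}$. *)

theory Defs
  imports "HOL-Analysis.Analysis" "HOL-Computational_Algebra.Polynomial"
begin

text \<open>The space D is modelled as 'f^3; its dual D* is identified with 'f^3 via the
  pairing below, so alpha(d) = dpair alpha d.\<close>

definition dpair :: "'f::field ^ 3 \<Rightarrow> 'f ^ 3 \<Rightarrow> 'f" where
  "dpair \<alpha> d = (\<Sum>i\<in>UNIV. \<alpha> $ i * d $ i)"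

definition is_Z3_lattice :: "('f::field ^ 3) set \<Rightarrow> bool" where
  "is_Z3_lattice \<Gamma> \<longleftrightarrow>
     (\<exists>g1 g2 g3.
        \<Gamma> = {of_int i *s g1 + of_int j *s g2 + of_int k *s g3 | i j k. True} \<and>
        (\<forall>i j k :: int. of_int i *s g1 + of_int j *s g2 + of_int k *s g3 = 0
                        \<longrightarrow> i = 0 \<and> j = 0 \<and> k = 0))"

text \<open>The carrier is the type 'm with F-scalar
  multiplication smul; Mg theta is the homogeneous component M_theta; act alpha d m is
  the action of the element x^alpha d (alpha in Gamma - {0}, d in ker alpha) on m.
  A representation of S(Gamma,D) = (direct sum over alpha of x^alpha ker alpha) is the
  same as a family of maps, linear in d on ker alpha, with values in End(M), respecting the bracket.\<close>
definition graded_S_module ::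
  "('f::field ^ 3) set \<Rightarrow> ('f \<Rightarrow> 'm::ab_group_add \<Rightarrow> 'm) \<Rightarrow> ('f ^ 3 \<Rightarrow> 'm set)
     \<Rightarrow> ('f ^ 3 \<Rightarrow> 'f ^ 3 \<Rightarrow> 'm \<Rightarrow> 'm) \<Rightarrow> bool" where
  "graded_S_module \<Gamma> smul Mg act \<longleftrightarrow>
     vector_space smul \<and>
     (\<forall>\<theta>\<in>\<Gamma>. module.subspace smul (Mg \<theta>)) \<and>
     \<comment> \<open>M is the direct sum of the M_theta, theta in Gamma\<close>
     (\<forall>m. \<exists>!f. (\<forall>\<theta>. f \<theta> \<in> Mg \<theta>) \<and> (\<forall>\<theta>. \<theta> \<notin> \<Gamma> \<longrightarrow> f \<theta> = 0) \<and>
               finite {\<theta>. f \<theta> \<noteq> 0} \<and> m = sum f {\<theta>. f \<theta> \<noteq> 0}) \<and>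
     \<comment> \<open>each x^alpha d acts linearly on M\<close>
     (\<forall>\<alpha>\<in>\<Gamma> - {0}. \<forall>d. dpair \<alpha> d = 0 \<longrightarrow>
        (\<forall>m m'. act \<alpha> d (m + m') = act \<alpha> d m + act \<alpha> d m') \<and>
        (\<forall>c m. act \<alpha> d (smul c m) = smul c (act \<alpha> d m))) \<and>
     \<comment> \<open>the action is linear in d in ker alpha\<close>
     (\<forall>\<alpha>\<in>\<Gamma> - {0}. \<forall>d d' c m. dpair \<alpha> d = 0 \<longrightarrow> dpair \<alpha> d' = 0 \<longrightarrow>
        act \<alpha> (c *s d + d') m = smul c (act \<alpha> d m) + act \<alpha> d' m) \<and>
     \<comment> \<open>bracket relation; for alpha + beta = 0 the bracket is 0 in S(Gamma,D)\<close>
     (\<forall>\<alpha>\<in>\<Gamma> - {0}. \<forall>\<beta>\<in>\<Gamma> - {0}. \<forall>d1 d2 m. dpair \<alpha> d1 = 0 \<longrightarrow> dpair \<beta> d2 = 0 \<longrightarrow>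
        act \<alpha> d1 (act \<beta> d2 m) - act \<beta> d2 (act \<alpha> d1 m) =
          (if \<alpha> + \<beta> = 0 then 0
           else act (\<alpha> + \<beta>) (dpair \<beta> d1 *s d2 - dpair \<alpha> d2 *s d1) m)) \<and>
     \<comment> \<open>grading: x^alpha d . M_theta is contained in M_(alpha+theta)\<close>
     (\<forall>\<alpha>\<in>\<Gamma> - {0}. \<forall>d \<theta> m. dpair \<alpha> d = 0 \<longrightarrow> \<theta> \<in> \<Gamma> \<longrightarrow> m \<in> Mg \<theta> \<longrightarrow>
        act \<alpha> d m \<in> Mg (\<alpha> + \<theta>))"

end

theory Submission
  imports Defs
begin


lemma dpair_add1: "dpair (a + b) d = dpair a d + dpair b d"
  unfolding dpair_def by (simp add: distrib_right sum.distrib)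
lemma dpair_neg1: "dpair (- a) d = - dpair a d"
  unfolding dpair_def by (simp add: sum_negf)
lemma dpair_diff1: "dpair (a - b) d = dpair a d - dpair b d"
  unfolding dpair_def by (simp add: algebra_simps sum_subtractf)
lemma dpair_smul1: "dpair (c *s a) d = c * dpair a d"
  unfolding dpair_def by (simp add: sum_distrib_left mult.assoc)
lemma dpair_add2: "dpair a (d + e) = dpair a d + dpair a e"
  unfolding dpair_def by (simp add: distrib_left sum.distrib)
lemma dpair_diff2: "dpair a (d - e) = dpair a d - dpair a e"
  unfolding dpair_def by (simp add: algebra_simps sum_subtractf)
lemma dpair_smul2: "dpair a (c *s d) = c * dpair a d"
  unfolding dpair_def by (simp add: sum_distrib_left algebra_simps)
lemma dpair_zero2: "dpair a 0 = 0"
  unfolding dpair_def by simp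

lemmas dpair_simps = dpair_add1 dpair_neg1 dpair_diff1 dpair_smul1 dpair_add2 dpair_diff2 dpair_smul2 dpair_zero2

lemma int2_induct:
  fixes P :: "int \<Rightarrow> int \<Rightarrow> bool"
  assumes "P 0 0" "\<And>i k. P i k \<Longrightarrow> P (i+1) k" "\<And>i k. P i k \<Longrightarrow> P (i-1) k"
    "\<And>i k. P i k \<Longrightarrow> P i (k+1)" "\<And>i k. P i k \<Longrightarrow> P i (k-1)"
  shows "P i k"
proof -
  have "P 0 k" by (induct k rule: int_induct[where k=0]) (use assms in auto)
  then show ?thesis by (induct i rule: int_induct[where k=0]) (use assms in auto)
qed

locale gm =
  fixes \<Gamma> :: "('f::field ^ 3) set" and smul :: "'f \<Rightarrow> 'm::ab_group_add \<Rightarrow> 'm"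
    and Mg :: "'f ^ 3 \<Rightarrow> 'm set" and act :: "'f ^ 3 \<Rightarrow> 'f ^ 3 \<Rightarrow> 'm \<Rightarrow> 'm"
    and w :: "'f ^ 3 \<Rightarrow> 'm"
  assumes module: "graded_S_module \<Gamma> smul Mg act"
    and basis: "\<forall>\<theta>\<in>\<Gamma>. w \<theta> \<noteq> 0 \<and> Mg \<theta> = {smul c (w \<theta>) | c. True}"
    and Gadd: "\<And>x y. x \<in> \<Gamma> \<Longrightarrow> y \<in> \<Gamma> \<Longrightarrow> x + y \<in> \<Gamma>"
    and Gneg: "\<And>x. x \<in> \<Gamma> \<Longrightarrow> - x \<in> \<Gamma>"
begin

lemma vs: "vector_space smul" using module unfolding graded_S_module_def by blast
lemma md: "module smul" using vs module_iff_vector_space by blast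

lemma sm_radd: "smul a (x + y) = smul a x + smul a y" by (rule module.scale_right_distrib[OF md])
lemma sm_ladd: "smul (a + b) x = smul a x + smul b x" by (rule module.scale_left_distrib[OF md])
lemma sm_assoc: "smul a (smul b x) = smul (a * b) x" by (rule module.scale_scale[OF md])
lemma sm_one: "smul 1 x = x" by (rule module.scale_one[OF md])
lemma sm_zero_l: "smul 0 x = 0" by (rule module.scale_zero_left[OF md])
lemma sm_zero_r: "smul a 0 = 0" by (rule module.scale_zero_right[OF md])
lemma sm_ldiff: "smul (a - b) x = smul a x - smul b x" by (rule module.scale_left_diff_distrib[OF md])
lemma sm_rdiff: "smul a (x - y) = smul a x - smul a y" by (rule module.scale_right_diff_distrib[OF md])
lemma sm_neg: "smul (- a) x = - smul a x" by (rule module.scale_minus_left[OF md])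
lemma sm_eq0: "smul a x = 0 \<longleftrightarrow> a = 0 \<or> x = 0" by (rule vector_space.scale_eq_0_iff[OF vs])
lemma sm_cancel: "smul a x = smul b x \<longleftrightarrow> a = b \<or> x = 0" by (rule vector_space.scale_cancel_right[OF vs])

lemma act_add: "\<alpha> \<in> \<Gamma> \<Longrightarrow> \<alpha> \<noteq> 0 \<Longrightarrow> dpair \<alpha> d = 0 \<Longrightarrow> act \<alpha> d (m + m') = act \<alpha> d m + act \<alpha> d m'"
  using module unfolding graded_S_module_def by blast
lemma act_sm: "\<alpha> \<in> \<Gamma> \<Longrightarrow> \<alpha> \<noteq> 0 \<Longrightarrow> dpair \<alpha> d = 0 \<Longrightarrow> act \<alpha> d (smul c m) = smul c (act \<alpha> d m)"
  using module unfolding graded_S_module_def by blast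
lemma act_lin: "\<alpha> \<in> \<Gamma> \<Longrightarrow> \<alpha> \<noteq> 0 \<Longrightarrow> dpair \<alpha> d = 0 \<Longrightarrow> dpair \<alpha> d' = 0 \<Longrightarrow>
    act \<alpha> (c *s d + d') m = smul c (act \<alpha> d m) + act \<alpha> d' m"
  using module unfolding graded_S_module_def by blast
lemma act_0v: "\<alpha> \<in> \<Gamma> \<Longrightarrow> \<alpha> \<noteq> 0 \<Longrightarrow> act \<alpha> 0 m = 0"
  using act_lin[of \<alpha> 0 0 1 m] by (simp add: dpair_zero2 sm_one)
lemma act_sv: "\<alpha> \<in> \<Gamma> \<Longrightarrow> \<alpha> \<noteq> 0 \<Longrightarrow> dpair \<alpha> d = 0 \<Longrightarrow> act \<alpha> (c *s d) m = smul c (act \<alpha> d m)"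
  using act_lin[of \<alpha> d 0 c m] by (simp add: dpair_zero2 act_0v)
lemma act_sub: "\<alpha> \<in> \<Gamma> \<Longrightarrow> \<alpha> \<noteq> 0 \<Longrightarrow> dpair \<alpha> d = 0 \<Longrightarrow> act \<alpha> d (m - m') = act \<alpha> d m - act \<alpha> d m'"
  using act_add[of \<alpha> d "m - m'" m'] by (simp add: eq_diff_eq)
lemma act_zero: "\<alpha> \<in> \<Gamma> \<Longrightarrow> \<alpha> \<noteq> 0 \<Longrightarrow> dpair \<alpha> d = 0 \<Longrightarrow> act \<alpha> d 0 = 0"
  using act_sm[of \<alpha> d 0 0] by (simp add: sm_zero_l)

lemma brk_all: "\<forall>\<alpha>\<in>\<Gamma> - {0}. \<forall>\<beta>\<in>\<Gamma> - {0}. \<forall>d1 d2 m. dpair \<alpha> d1 = 0 \<longrightarrow> dpair \<beta> d2 = 0 \<longrightarrow>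
        act \<alpha> d1 (act \<beta> d2 m) - act \<beta> d2 (act \<alpha> d1 m) =
          (if \<alpha> + \<beta> = 0 then 0
           else act (\<alpha> + \<beta>) (dpair \<beta> d1 *s d2 - dpair \<alpha> d2 *s d1) m)"
  using module unfolding graded_S_module_def by blast
lemma brk: "\<alpha> \<in> \<Gamma> \<Longrightarrow> \<alpha> \<noteq> 0 \<Longrightarrow> \<beta> \<in> \<Gamma> \<Longrightarrow> \<beta> \<noteq> 0 \<Longrightarrow> \<alpha> + \<beta> \<noteq> 0 \<Longrightarrow>
   dpair \<alpha> x = 0 \<Longrightarrow> dpair \<beta> y = 0 \<Longrightarrow>
   act \<alpha> x (act \<beta> y m) = act \<beta> y (act \<alpha> x m) + act (\<alpha> + \<beta>) (dpair \<beta> x *s y - dpair \<alpha> y *s x) m"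
proof -
  assume h: "\<alpha> \<in> \<Gamma>" "\<alpha> \<noteq> 0" "\<beta> \<in> \<Gamma>" "\<beta> \<noteq> 0" "\<alpha> + \<beta> \<noteq> 0" "dpair \<alpha> x = 0" "dpair \<beta> y = 0"
  have "act \<alpha> x (act \<beta> y m) - act \<beta> y (act \<alpha> x m) =
          (if \<alpha> + \<beta> = 0 then 0 else act (\<alpha> + \<beta>) (dpair \<beta> x *s y - dpair \<alpha> y *s x) m)"
    using brk_all h(1-4,6,7) by blast
  then show ?thesis using h(5) by (simp add: diff_eq_eq add.commute)
qed
lemma brk0: "\<alpha> \<in> \<Gamma> \<Longrightarrow> \<alpha> \<noteq> 0 \<Longrightarrow> \<beta> \<in> \<Gamma> \<Longrightarrow> \<beta> \<noteq> 0 \<Longrightarrow> \<alpha> + \<beta> = 0 \<Longrightarrow>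
   dpair \<alpha> x = 0 \<Longrightarrow> dpair \<beta> y = 0 \<Longrightarrow>
   act \<alpha> x (act \<beta> y m) = act \<beta> y (act \<alpha> x m)"
proof -
  assume h: "\<alpha> \<in> \<Gamma>" "\<alpha> \<noteq> 0" "\<beta> \<in> \<Gamma>" "\<beta> \<noteq> 0" "\<alpha> + \<beta> = 0" "dpair \<alpha> x = 0" "dpair \<beta> y = 0"
  have "act \<alpha> x (act \<beta> y m) - act \<beta> y (act \<alpha> x m) =
          (if \<alpha> + \<beta> = 0 then 0 else act (\<alpha> + \<beta>) (dpair \<beta> x *s y - dpair \<alpha> y *s x) m)"
    using brk_all h(1-4,6,7) by blast
  then show ?thesis using h(5) by simp
qed
lemma grade: "\<alpha> \<in> \<Gamma> \<Longrightarrow> \<alpha> \<noteq> 0 \<Longrightarrow> dpair \<alpha> d = 0 \<Longrightarrow> \<theta> \<in> \<Gamma> \<Longrightarrow> m \<in> Mg \<theta> \<Longrightarrow> act \<alpha> d m \<in> Mg (\<alpha> + \<theta>)"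
  using module unfolding graded_S_module_def by blast
lemma Mg_sm: "\<theta> \<in> \<Gamma> \<Longrightarrow> m \<in> Mg \<theta> \<Longrightarrow> smul c m \<in> Mg \<theta>"
proof -
  assume h: "\<theta> \<in> \<Gamma>" "m \<in> Mg \<theta>"
  then have M: "Mg \<theta> = {smul c (w \<theta>) | c. True}" using basis by blast
  with h obtain c' where "m = smul c' (w \<theta>)" by blast
  then have "smul c m = smul (c * c') (w \<theta>)" by (simp add: sm_assoc)
  then show ?thesis using M by blast
qed
lemma onedim: "\<theta> \<in> \<Gamma> \<Longrightarrow> x \<in> Mg \<theta> \<Longrightarrow> y \<in> Mg \<theta> \<Longrightarrow> y \<noteq> 0 \<Longrightarrow> \<exists>c. x = smul c y"
proof -
  assume h: "\<theta> \<in> \<Gamma>" "x \<in> Mg \<theta>" "y \<in> Mg \<theta>" "y \<noteq> 0"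
  then obtain c1 c2 where c: "x = smul c1 (w \<theta>)" "y = smul c2 (w \<theta>)" using basis by auto
  with h have "c2 \<noteq> 0" by (auto simp: sm_zero_l)
  then have "x = smul (c1 / c2) y" using c by (simp add: sm_assoc)
  then show ?thesis by blast
qed

lemma Gint: "x \<in> \<Gamma> \<Longrightarrow> of_int i *s x \<in> \<Gamma>"
proof (induct i rule: int_induct[where k=0])
  case base
  then show ?case using Gadd[OF base Gneg[OF base]] by simp
next
  case (step1 i)
  then show ?case using Gadd[of "of_int i *s x" x] by (simp add: vec_eq_iff algebra_simps)
next
  case (step2 i)
  then show ?case using Gadd[of "of_int i *s x" "-x"] Gneg by (simp add: vec_eq_iff algebra_simps)
qed

end

lemma (in gm) comm1:
  assumes "\<alpha> \<in> \<Gamma>" "\<alpha> \<noteq> 0" "\<beta> \<in> \<Gamma>" "\<beta> \<noteq> 0" "dpair \<alpha> x = 0" "dpair \<beta> x = 0"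
  shows "act \<alpha> x (act \<beta> x m) = act \<beta> x (act \<alpha> x m)"
proof (cases "\<alpha> + \<beta> = 0")
  case True
  then show ?thesis using brk0 assms by blast
next
  case False
  then have "\<alpha> + \<beta> \<in> \<Gamma>" using assms Gadd by blast
  then show ?thesis using brk[OF assms(1-4) False assms(5,6), of m] assms False by (simp add: act_0v)
qed


lemma alg0:
  fixes g A e p X \<beta> \<delta> :: "'a::field"
  assumes "e \<noteq> 0" "\<delta>*X = p*p"
    and eq: "(g*\<delta> - A*e)*(\<beta> + X) = \<beta>*((g-e)*\<delta> - A*e) + p*p*g"
  shows "\<beta>*\<delta> = A*X"
proof -
  have "e * (\<beta>*\<delta> - A*X) = 0" using assms(2) eq by algebra
  then show ?thesis using assms(1) by simp
qed
lemma alg: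
  fixes g A e p d b1 \<beta> \<delta> :: "'a::field"
  assumes "e \<noteq> 0" "p \<noteq> 0" "d \<noteq> 0" "b1 \<noteq> 0" "d*d = b1*b1"
    and eq: "(g*(p*d/b1) - A*e)*(\<beta> + p*b1/d) = \<beta>*((g-e)*(p*d/b1) - A*e) + p*p*g"
  shows "\<beta> = A"
proof -
  have 2: "(p*d/b1)*(p*b1/d) = p*p" using assms by (simp add: field_simps)
  have "\<beta>*(p*d/b1) = A*(p*b1/d)" by (rule alg0[OF assms(1) 2 eq])
  then have "\<beta>*(d*d) = A*(b1*b1)" using assms(2-4) by (simp add: field_simps)
  then show ?thesis using assms(3,4,5) by simp
qed

locale fam = gm \<Gamma> smul Mg act w for \<Gamma> :: "('f::field ^ 3) set" and smul :: "'f \<Rightarrow> 'm::ab_group_add \<Rightarrow> 'm"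
    and Mg act w +
  fixes \<sigma> \<rho> \<nu> d1 d2 d3 :: "'f ^ 3" and a1 b1 :: 'f and v :: "int \<Rightarrow> int \<Rightarrow> 'm" and d a2 :: 'f
  assumes \<sigma>\<Gamma>: "\<sigma> \<in> \<Gamma>" and \<rho>\<Gamma>: "\<rho> \<in> \<Gamma>" and \<nu>\<Gamma>: "\<nu> \<in> \<Gamma>"
    and indep: "\<forall>i k :: int. of_int i *s \<sigma> + of_int k *s \<rho> = 0 \<longrightarrow> i = 0 \<and> k = 0"
    and s1: "dpair \<sigma> d1 = 0" and r1: "dpair \<rho> d1 = 0" and s2: "dpair \<sigma> d2 = 0" and r3: "dpair \<rho> d3 = 0"
    and pnz: "dpair \<rho> d2 \<noteq> 0" and qnz: "dpair \<sigma> d3 \<noteq> 0"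
    and a1nz: "a1 \<noteq> 0" and b1nz: "b1 \<noteq> 0"
    and vmem: "\<forall>i k. v i k \<in> Mg (\<nu> + of_int i *s \<sigma> + of_int k *s \<rho>) \<and> v i k \<noteq> 0"
    and vrel: "\<forall>i k. act \<sigma> d1 (v i k) = smul a1 (v (i + 1) k) \<and>
               act (- \<sigma>) d1 (v i k) = smul a1 (v (i - 1) k) \<and>
               act \<rho> d1 (v i k) = smul b1 (v i (k + 1)) \<and>
               act (- \<rho>) d1 (v i k) = smul b1 (v i (k - 1))"
    and base2: "act \<sigma> d2 (v 0 0) = smul a2 (v 1 0)"
    and baseD: "act (\<sigma> + \<rho>) d1 (v 0 0) = smul d (v 1 1)"
begin

abbreviation pt where "pt i k \<equiv> \<nu> + of_int i *s \<sigma> + of_int k *s \<rho>"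

lemma comb_nz: "\<not> (i = 0 \<and> k = 0) \<Longrightarrow> of_int i *s \<sigma> + of_int k *s \<rho> \<noteq> 0"
  using indep by blast

lemma nzs: "\<sigma> \<noteq> 0" "\<rho> \<noteq> 0" "\<sigma> + \<rho> \<noteq> 0" "\<rho> - \<sigma> \<noteq> 0" "\<sigma> - \<rho> \<noteq> 0"
  "- \<sigma> - \<rho> \<noteq> 0" "\<sigma> + \<sigma> \<noteq> 0" "\<rho> + \<rho> \<noteq> 0"
proof -
  have e: "\<sigma> = of_int 1 *s \<sigma> + of_int 0 *s \<rho>" "\<rho> = of_int 0 *s \<sigma> + of_int 1 *s \<rho>"
    "\<sigma> + \<rho> = of_int 1 *s \<sigma> + of_int 1 *s \<rho>" "\<rho> - \<sigma> = of_int (-1) *s \<sigma> + of_int 1 *s \<rho>"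
    "\<sigma> - \<rho> = of_int 1 *s \<sigma> + of_int (-1) *s \<rho>" "- \<sigma> - \<rho> = of_int (-1) *s \<sigma> + of_int (-1) *s \<rho>"
    "\<sigma> + \<sigma> = of_int 2 *s \<sigma> + of_int 0 *s \<rho>" "\<rho> + \<rho> = of_int 0 *s \<sigma> + of_int 2 *s \<rho>"
    by (simp_all add: vec_eq_iff)
  show "\<sigma> \<noteq> 0" "\<rho> \<noteq> 0" "\<sigma> + \<rho> \<noteq> 0" "\<rho> - \<sigma> \<noteq> 0" "\<sigma> - \<rho> \<noteq> 0"
  "- \<sigma> - \<rho> \<noteq> 0" "\<sigma> + \<sigma> \<noteq> 0" "\<rho> + \<rho> \<noteq> 0"
    by (subst e, rule comb_nz, simp)+
qed

lemma nzs2: "\<rho> \<noteq> \<sigma>" "\<sigma> \<noteq> \<rho>" using nzs(4,5) by auto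

lemma mems: "\<sigma> \<in> \<Gamma>" "\<rho> \<in> \<Gamma>" "-\<sigma> \<in> \<Gamma>" "-\<rho> \<in> \<Gamma>" "\<sigma> + \<rho> \<in> \<Gamma>" "\<rho> - \<sigma> \<in> \<Gamma>"
   "\<sigma> - \<rho> \<in> \<Gamma>" "- \<sigma> - \<rho> \<in> \<Gamma>" "pt i k \<in> \<Gamma>" "\<sigma> + \<sigma> \<in> \<Gamma>" "\<rho> + \<rho> \<in> \<Gamma>"
  using \<sigma>\<Gamma> \<rho>\<Gamma> Gadd[OF \<sigma>\<Gamma> \<rho>\<Gamma>] Gadd[OF \<rho>\<Gamma> Gneg[OF \<sigma>\<Gamma>]] Gadd[OF \<sigma>\<Gamma> Gneg[OF \<rho>\<Gamma>]]
    Gadd[OF Gneg[OF \<sigma>\<Gamma>] Gneg[OF \<rho>\<Gamma>]] Gneg[OF \<sigma>\<Gamma>] Gneg[OF \<rho>\<Gamma>]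
    Gadd[OF Gadd[OF \<nu>\<Gamma> Gint[OF \<sigma>\<Gamma>, of i]] Gint[OF \<rho>\<Gamma>, of k]]
    Gadd[OF \<sigma>\<Gamma> \<sigma>\<Gamma>] Gadd[OF \<rho>\<Gamma> \<rho>\<Gamma>]
  by (simp_all only: diff_conv_add_uminus)

lemma dps: "dpair \<sigma> d1 = 0" "dpair \<rho> d1 = 0" "dpair \<sigma> d2 = 0" "dpair \<rho> d3 = 0"
  "dpair (-\<sigma>) d1 = 0" "dpair (-\<rho>) d1 = 0" "dpair (-\<sigma>) d2 = 0" "dpair (-\<rho>) d3 = 0"
  "dpair (\<sigma> + \<rho>) d1 = 0" "dpair (\<rho> - \<sigma>) d1 = 0" "dpair (\<sigma> - \<rho>) d1 = 0" "dpair (- \<sigma> - \<rho>) d1 = 0"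
  using s1 r1 s2 r3 by (simp_all add: dpair_simps)

lemmas facts = nzs nzs2 mems dps

lemma shifts: "\<sigma> + pt i k = pt (i+1) k" "- \<sigma> + pt i k = pt (i-1) k" "\<rho> + pt i k = pt i (k+1)"
  "- \<rho> + pt i k = pt i (k - 1)" "\<sigma> + \<rho> + pt i k = pt (i+1) (k+1)" "\<rho> - \<sigma> + pt i k = pt (i - 1) (k + 1)"
  "\<sigma> - \<rho> + pt i k = pt (i + 1) (k - 1)" "- \<sigma> - \<rho> + pt i k = pt (i - 1) (k - 1)"
  by (simp_all add: vec_eq_iff algebra_simps)

lemma vnz: "v i k \<noteq> 0" using vmem by blast
lemma vin: "v i k \<in> Mg (pt i k)" using vmem by blast

lemma mem_act: "\<alpha> \<in> \<Gamma> \<Longrightarrow> \<alpha> \<noteq> 0 \<Longrightarrow> dpair \<alpha> x = 0 \<Longrightarrow> \<alpha> + pt i k = pt i' k' \<Longrightarrow> act \<alpha> x (v i k) \<in> Mg (pt i' k')"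
proof -
  assume h: "\<alpha> \<in> \<Gamma>" "\<alpha> \<noteq> 0" "dpair \<alpha> x = 0" "\<alpha> + pt i k = pt i' k'"
  have "act \<alpha> x (v i k) \<in> Mg (\<alpha> + pt i k)" using grade[OF h(1,2,3) mems(9) vin] .
  then show ?thesis using h(4) by metis
qed

lemma vdim: "x \<in> Mg (pt i k) \<Longrightarrow> \<exists>c. x = smul c (v i k)"
  using onedim[of "pt i k" x "v i k"] vin vnz mems by blast

lemma R: "act \<sigma> d1 (v i k) = smul a1 (v (i + 1) k)" "act (- \<sigma>) d1 (v i k) = smul a1 (v (i - 1) k)"
   "act \<rho> d1 (v i k) = smul b1 (v i (k + 1))" "act (- \<rho>) d1 (v i k) = smul b1 (v i (k - 1))"
  using vrel by blast+

lemma Rinv: "v (i + 1) k = smul (1/a1) (act \<sigma> d1 (v i k))" "v (i - 1) k = smul (1/a1) (act (- \<sigma>) d1 (v i k))"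
   "v i (k + 1) = smul (1/b1) (act \<rho> d1 (v i k))" "v i (k - 1) = smul (1/b1) (act (- \<rho>) d1 (v i k))"
  using a1nz b1nz by (simp_all add: R sm_assoc sm_one)

lemma Tsr: "act (\<sigma> + \<rho>) d1 (v i k) = smul d (v (i + 1) (k + 1))"
proof (induct i k rule: int2_induct)
  case 1
  then show ?case using baseD by simp
next
  case (2 i k)
  have "act (\<sigma> + \<rho>) d1 (v (i+1) k) = smul (1/a1) (act (\<sigma> + \<rho>) d1 (act \<sigma> d1 (v i k)))"
    by (subst Rinv(1)) (simp add: act_sm facts)
  also have "\<dots> = smul (1/a1) (act \<sigma> d1 (act (\<sigma> + \<rho>) d1 (v i k)))"
    using comm1[of "\<sigma> + \<rho>" \<sigma> d1] facts by simp
  also have "\<dots> = smul d (v (i + 1 + 1) (k + 1))"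
    using a1nz by (simp add: 2 act_sm facts R sm_assoc)
  finally show ?case .
next
  case (3 i k)
  have "act (\<sigma> + \<rho>) d1 (v (i-1) k) = smul (1/a1) (act (\<sigma> + \<rho>) d1 (act (-\<sigma>) d1 (v i k)))"
    by (subst Rinv(2)) (simp add: act_sm facts)
  also have "\<dots> = smul (1/a1) (act (-\<sigma>) d1 (act (\<sigma> + \<rho>) d1 (v i k)))"
    using comm1[of "\<sigma> + \<rho>" "-\<sigma>" d1] facts by simp
  also have "\<dots> = smul d (v (i - 1 + 1) (k + 1))"
    using a1nz by (simp add: 3 act_sm facts R sm_assoc)
  finally show ?case .
next
  case (4 i k)
  have "act (\<sigma> + \<rho>) d1 (v i (k+1)) = smul (1/b1) (act (\<sigma> + \<rho>) d1 (act \<rho> d1 (v i k)))"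
    by (subst Rinv(3)) (simp add: act_sm facts)
  also have "\<dots> = smul (1/b1) (act \<rho> d1 (act (\<sigma> + \<rho>) d1 (v i k)))"
    using comm1[of "\<sigma> + \<rho>" \<rho> d1] facts by simp
  also have "\<dots> = smul d (v (i + 1) (k + 1 + 1))"
    using b1nz by (simp add: 4 act_sm facts R sm_assoc)
  finally show ?case .
next
  case (5 i k)
  have "act (\<sigma> + \<rho>) d1 (v i (k-1)) = smul (1/b1) (act (\<sigma> + \<rho>) d1 (act (-\<rho>) d1 (v i k)))"
    by (subst Rinv(4)) (simp add: act_sm facts)
  also have "\<dots> = smul (1/b1) (act (-\<rho>) d1 (act (\<sigma> + \<rho>) d1 (v i k)))"
    using comm1[of "\<sigma> + \<rho>" "-\<rho>" d1] facts by simp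
  also have "\<dots> = smul d (v (i + 1) (k - 1 + 1))"
    using b1nz by (simp add: 5 act_sm facts R sm_assoc)
  finally show ?case .
qed


abbreviation p where "p \<equiv> dpair \<rho> d2"

lemma commA: "act \<sigma> d2 (act \<sigma> d1 m) = act \<sigma> d1 (act \<sigma> d2 m)"
   "act \<sigma> d2 (act (-\<sigma>) d1 m) = act (-\<sigma>) d1 (act \<sigma> d2 m)"
proof -
  show "act \<sigma> d2 (act \<sigma> d1 m) = act \<sigma> d1 (act \<sigma> d2 m)"
    using brk[of \<sigma> \<sigma> d2 d1 m] facts by (simp add: act_0v)
  show "act \<sigma> d2 (act (-\<sigma>) d1 m) = act (-\<sigma>) d1 (act \<sigma> d2 m)"
    using brk0[of \<sigma> "-\<sigma>" d2 d1 m] facts by simp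
qed

lemma brkA: "act \<sigma> d2 (act \<rho> d1 m) = act \<rho> d1 (act \<sigma> d2 m) + smul p (act (\<sigma> + \<rho>) d1 m)"
proof -
  have "act \<sigma> d2 (act \<rho> d1 m) = act \<rho> d1 (act \<sigma> d2 m) + act (\<sigma> + \<rho>) (p *s d1 - dpair \<sigma> d1 *s d2) m"
    using brk[of \<sigma> \<rho> d2 d1 m] facts by simp
  then show ?thesis using facts by (simp add: act_sv)
qed

lemma Kstep: "act \<sigma> d2 (v i k) = smul c (v (i+1) k) \<Longrightarrow>
   act \<sigma> d2 (v i (k+1)) = smul (c + p * d / b1) (v (i+1) (k+1))"
proof -
  assume h: "act \<sigma> d2 (v i k) = smul c (v (i+1) k)"
  have "act \<sigma> d2 (v i (k+1)) = smul (1/b1) (act \<sigma> d2 (act \<rho> d1 (v i k)))"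
    by (subst Rinv(3)) (simp add: act_sm facts)
  also have "\<dots> = smul (1/b1) (act \<rho> d1 (smul c (v (i+1) k)) + smul p (smul d (v (i+1) (k+1))))"
    by (simp add: brkA h Tsr)
  also have "\<dots> = smul ((c * b1 + p * d) / b1) (v (i+1) (k+1))"
    by (simp add: act_sm facts R sm_assoc sm_radd sm_ladd add_divide_distrib)
  also have "(c * b1 + p * d) / b1 = c + p * d / b1" using b1nz by (simp add: field_simps)
  finally show ?thesis .
qed

abbreviation al where "al k \<equiv> a2 + of_int k * p * d / b1"

lemma Afwd: "act \<sigma> d2 (v i k) = smul (al k) (v (i+1) k)"
proof (induct i k rule: int2_induct)
  case 1
  then show ?case using base2 by simp
next
  case (2 i k)
  have "act \<sigma> d2 (v (i+1) k) = smul (1/a1) (act \<sigma> d2 (act \<sigma> d1 (v i k)))"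
    by (subst Rinv(1)) (simp add: act_sm facts)
  also have "\<dots> = smul (1/a1) (act \<sigma> d1 (act \<sigma> d2 (v i k)))"
    by (simp only: commA)
  also have "\<dots> = smul (al k) (v (i + 1 + 1) k)"
    using a1nz by (simp add: 2 act_sm facts R sm_assoc)
  finally show ?case .
next
  case (3 i k)
  have "act \<sigma> d2 (v (i-1) k) = smul (1/a1) (act \<sigma> d2 (act (-\<sigma>) d1 (v i k)))"
    by (subst Rinv(2)) (simp add: act_sm facts)
  also have "\<dots> = smul (1/a1) (act (-\<sigma>) d1 (act \<sigma> d2 (v i k)))"
    by (simp only: commA)
  also have "\<dots> = smul (al k) (v (i - 1 + 1) k)"
    using a1nz by (simp add: 3 act_sm facts R sm_assoc)
  finally show ?case .
next
  case (4 i k)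
  have "act \<sigma> d2 (v i (k+1)) = smul (al k + p * d / b1) (v (i+1) (k+1))"
    by (rule Kstep[OF 4])
  also have "al k + p * d / b1 = al (k+1)" using b1nz by (simp add: field_simps)
  finally show ?case .
next
  case (5 i k)
  have "act \<sigma> d2 (v i (k-1)) \<in> Mg (pt (i+1) (k-1))"
    using mem_act[of \<sigma> d2 i "k-1" "i+1" "k-1"] facts shifts by simp
  then obtain c where c: "act \<sigma> d2 (v i (k-1)) = smul c (v (i+1) (k-1))" using vdim by blast
  have "act \<sigma> d2 (v i (k - 1 + 1)) = smul (c + p * d / b1) (v (i+1) (k - 1 + 1))"
    by (rule Kstep[OF c])
  then have "smul (al k) (v (i+1) k) = smul (c + p * d / b1) (v (i+1) k)" using 5 by simp
  then have "al k = c + p * d / b1" using vnz sm_cancel by blast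
  then have "c = al (k - 1)" using b1nz by (simp add: field_simps)
  then show ?case using c by simp
qed


abbreviation q where "q \<equiv> dpair \<sigma> d3"

lemma L3:
  assumes Cf: "\<And>i k. act \<rho> d3 (v i k) = smul (a3 + of_int i * q * d / a1) (v i (k+1))"
  shows "d * d = b1 * b1 \<and> (\<forall>i k. act (- \<sigma>) d2 (v i k) = smul (al k) (v (i - 1) k))"
proof -
  define ga where "ga i = a3 + of_int i * q * d / a1" for i :: int
  have Cf': "act \<rho> d3 (v i k) = smul (ga i) (v i (k+1))" for i k using Cf ga_def by simp
  have "act (\<rho> - \<sigma>) d1 (v 0 0) \<in> Mg (pt (0 - 1) (0 + 1))"
    using mem_act[of "\<rho> - \<sigma>" d1 0 0 "0 - 1" "0 + 1"] facts shifts by simp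
  then obtain e where e0: "act (\<rho> - \<sigma>) d1 (v 0 0) = smul e (v (-1) 1)" using vdim by fastforce
  have e1: "act (\<rho> - \<sigma>) d1 (v 1 0) = smul e (v 0 1)"
  proof -
    have "act (\<rho> - \<sigma>) d1 (v (0+1) 0) = smul (1/a1) (act (\<rho> - \<sigma>) d1 (act \<sigma> d1 (v 0 0)))"
      by (subst Rinv(1)) (simp add: act_sm facts)
    also have "\<dots> = smul (1/a1) (act \<sigma> d1 (act (\<rho> - \<sigma>) d1 (v 0 0)))"
      using comm1[of "\<rho> - \<sigma>" \<sigma> d1] facts by simp
    also have "\<dots> = smul e (v (-1 + 1) 1)"
      using a1nz by (simp add: e0 act_sm facts R sm_assoc)
    finally show ?thesis by simp
  qed
  have bA: "act \<sigma> d2 (act (\<rho> - \<sigma>) d1 m) = act (\<rho> - \<sigma>) d1 (act \<sigma> d2 m) + smul p (act \<rho> d1 m)" for m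
  proof -
    have "act \<sigma> d2 (act (\<rho> - \<sigma>) d1 m) = act (\<rho> - \<sigma>) d1 (act \<sigma> d2 m) +
            act (\<sigma> + (\<rho> - \<sigma>)) (dpair (\<rho> - \<sigma>) d2 *s d1 - dpair \<sigma> d1 *s d2) m"
      by (rule brk) (use facts in \<open>simp_all\<close>)
    then show ?thesis using facts by (simp add: dpair_simps act_sv)
  qed
  have "act \<sigma> d2 (act (\<rho> - \<sigma>) d1 (v 0 0)) = smul (e * al 1) (v 0 1)"
    using Afwd[of "-1" 1] by (simp add: e0 act_sm facts sm_assoc)
  moreover have "act \<sigma> d2 (act (\<rho> - \<sigma>) d1 (v 0 0)) = smul (al 0 * e + p * b1) (v 0 1)"
    using Afwd[of 0 0] by (simp add: bA e1 act_sm facts sm_assoc R sm_ladd)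
  ultimately have "e * al 1 = al 0 * e + p * b1" using vnz sm_cancel by metis
  then have "e * (p * d / b1) = p * b1" by (simp add: algebra_simps)
  then have ed: "e * d = b1 * b1" using pnz b1nz by (simp add: field_simps)
  have bC: "act \<rho> d3 (act (- \<sigma>) d1 m) = act (- \<sigma>) d1 (act \<rho> d3 m) + smul (- q) (act (\<rho> - \<sigma>) d1 m)" for m
  proof -
    have "act \<rho> d3 (act (- \<sigma>) d1 m) = act (- \<sigma>) d1 (act \<rho> d3 m) +
            act (\<rho> + - \<sigma>) (dpair (- \<sigma>) d3 *s d1 - dpair \<rho> d1 *s d3) m"
      by (rule brk) (use facts in \<open>simp_all\<close>)
    moreover have "dpair (- \<sigma>) d3 *s d1 - dpair \<rho> d1 *s d3 = (- q) *s d1"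
      using r1 by (simp add: dpair_simps vec_eq_iff)
    moreover have "\<rho> + - \<sigma> = \<rho> - \<sigma>" by simp
    moreover have "act (\<rho> - \<sigma>) ((- q) *s d1) m = smul (- q) (act (\<rho> - \<sigma>) d1 m)"
      by (rule act_sv) (use facts in simp_all)
    ultimately show ?thesis by metis
  qed
  have "act \<rho> d3 (act (- \<sigma>) d1 (v 0 0)) = smul (a1 * ga (-1)) (v (-1) 1)"
    using Cf'[of "-1" 0] by (simp add: R act_sm facts sm_assoc)
  moreover have "act \<rho> d3 (act (- \<sigma>) d1 (v 0 0)) = smul (ga 0 * a1 - q * e) (v (-1) 1)"
  proof -
    have "act \<rho> d3 (act (- \<sigma>) d1 (v 0 0)) = act (- \<sigma>) d1 (act \<rho> d3 (v 0 0)) + smul (- q) (act (\<rho> - \<sigma>) d1 (v 0 0))"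
      by (rule bC)
    then show ?thesis using Cf'[of 0 0] by (simp add: e0 act_sm facts sm_assoc R sm_ldiff sm_neg)
  qed
  ultimately have "a1 * ga (-1) = ga 0 * a1 - q * e" using vnz sm_cancel by metis
  then have "d = e" using a1nz qnz by (auto simp add: ga_def field_simps)
  then have dd: "d * d = b1 * b1" using ed by simp
  have dnz: "d \<noteq> 0" using dd b1nz by auto
  have bBT: "act (- \<sigma>) d2 (act (\<sigma> + \<rho>) d1 m) = act (\<sigma> + \<rho>) d1 (act (- \<sigma>) d2 m) + smul p (act \<rho> d1 m)" for m
  proof -
    have "act (- \<sigma>) d2 (act (\<sigma> + \<rho>) d1 m) = act (\<sigma> + \<rho>) d1 (act (- \<sigma>) d2 m) +
            act (- \<sigma> + (\<sigma> + \<rho>)) (dpair (\<sigma> + \<rho>) d2 *s d1 - dpair (- \<sigma>) d1 *s d2) m"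
      by (rule brk) (use facts in \<open>simp_all\<close>)
    then show ?thesis using facts by (simp add: dpair_simps act_sv)
  qed
  define gv where "gv = p *s d3 - q *s d2"
  have gv0: "dpair (\<sigma> + \<rho>) gv = 0" unfolding gv_def using s2 r3 by (simp add: dpair_simps algebra_simps)
  have bG: "act \<sigma> d2 (act \<rho> d3 m) = act \<rho> d3 (act \<sigma> d2 m) + act (\<sigma> + \<rho>) gv m" for m
    unfolding gv_def by (rule brk) (use facts in \<open>simp_all\<close>)
  have vec: "dpair (\<sigma> + \<rho>) d2 *s gv - dpair (- \<sigma>) gv *s d2 = (p * p) *s d3"
    unfolding gv_def using s2 by (simp add: dpair_simps vec_eq_iff algebra_simps)
  have bBG: "act (- \<sigma>) d2 (act (\<sigma> + \<rho>) gv m) = act (\<sigma> + \<rho>) gv (act (- \<sigma>) d2 m) + smul (p * p) (act \<rho> d3 m)" for m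
  proof -
    have "act (- \<sigma>) d2 (act (\<sigma> + \<rho>) gv m) = act (\<sigma> + \<rho>) gv (act (- \<sigma>) d2 m) +
            act (- \<sigma> + (\<sigma> + \<rho>)) (dpair (\<sigma> + \<rho>) d2 *s gv - dpair (- \<sigma>) gv *s d2) m"
      by (rule brk) (use facts gv0 in \<open>simp_all\<close>)
    then show ?thesis using facts by (simp add: vec act_sv)
  qed
  define h where "h i k = ga i * al (k+1) - al k * ga (i+1)" for i k
  have Gv: "act (\<sigma> + \<rho>) gv (v i k) = smul (h i k) (v (i+1) (k+1))" for i k
  proof -
    have "act (\<sigma> + \<rho>) gv (v i k) = act \<sigma> d2 (act \<rho> d3 (v i k)) - act \<rho> d3 (act \<sigma> d2 (v i k))"
      using bG by (simp add: algebra_simps)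
    also have "\<dots> = smul (ga i * al (k+1)) (v (i+1) (k+1)) - smul (al k * ga (i+1)) (v (i+1) (k+1))"
      by (simp add: Cf' Afwd act_sm facts sm_assoc mult.commute)
    finally show ?thesis by (simp add: h_def sm_ldiff)
  qed
  have B: "act (- \<sigma>) d2 (v i k) = smul (al k) (v (i - 1) k)" for i k
  proof -
    have "act (- \<sigma>) d2 (v i k) \<in> Mg (pt (i - 1) k)"
      using mem_act[of "-\<sigma>" d2 i k "i - 1" k] facts shifts by simp
    then obtain \<beta> where \<beta>: "act (- \<sigma>) d2 (v i k) = smul \<beta> (v (i - 1) k)" using vdim by blast
    have "act (- \<sigma>) d2 (v (i+1) (k+1)) \<in> Mg (pt (i + 1 - 1) (k+1))"
      using mem_act[of "-\<sigma>" d2 "i+1" "k+1" "i + 1 - 1" "k+1"] facts shifts by simp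
    then obtain \<beta>' where \<beta>': "act (- \<sigma>) d2 (v (i+1) (k+1)) = smul \<beta>' (v i (k+1))" using vdim by fastforce
    have "act (- \<sigma>) d2 (act (\<sigma> + \<rho>) d1 (v i k)) = smul (d * \<beta>') (v i (k+1))"
      by (simp add: Tsr \<beta>' act_sm facts sm_assoc)
    moreover have "act (- \<sigma>) d2 (act (\<sigma> + \<rho>) d1 (v i k)) = smul (\<beta> * d + p * b1) (v i (k+1))"
    proof -
      have "act (- \<sigma>) d2 (act (\<sigma> + \<rho>) d1 (v i k)) = act (\<sigma> + \<rho>) d1 (act (- \<sigma>) d2 (v i k)) + smul p (act \<rho> d1 (v i k))"
        by (rule bBT)
      then show ?thesis by (simp add: \<beta> Tsr R act_sm facts sm_assoc sm_ladd)
    qed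
    ultimately have "d * \<beta>' = \<beta> * d + p * b1" using vnz sm_cancel by metis
    then have eq1: "\<beta>' = \<beta> + p * b1 / d" using dnz by (simp add: field_simps)
    have "act (- \<sigma>) d2 (act (\<sigma> + \<rho>) gv (v i k)) = smul (h i k * \<beta>') (v i (k+1))"
      by (simp add: Gv \<beta>' act_sm facts sm_assoc)
    moreover have "act (- \<sigma>) d2 (act (\<sigma> + \<rho>) gv (v i k)) = smul (\<beta> * h (i - 1) k + p * p * ga i) (v i (k+1))"
    proof -
      have "act (- \<sigma>) d2 (act (\<sigma> + \<rho>) gv (v i k)) = act (\<sigma> + \<rho>) gv (act (- \<sigma>) d2 (v i k)) + smul (p * p) (act \<rho> d3 (v i k))"
        by (rule bBG)
      then show ?thesis using gv0 by (simp add: \<beta> Gv Cf' act_sm facts sm_assoc sm_ladd)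
    qed
    ultimately have eq2: "h i k * \<beta>' = \<beta> * h (i - 1) k + p * p * ga i" using vnz sm_cancel by metis
    define A where "A = al k"
    define E where "E = q * d / a1"
    have Enz: "E \<noteq> 0" using qnz dnz a1nz by (simp add: E_def)
    have h1: "h i k = ga i * (p * d / b1) - A * E"
      using b1nz a1nz by (simp add: h_def ga_def A_def E_def field_simps)
    have h2: "h (i - 1) k = (ga i - E) * (p * d / b1) - A * E"
      using b1nz a1nz by (simp add: h_def ga_def A_def E_def field_simps)
    have "(ga i * (p * d / b1) - A * E) * (\<beta> + p * b1 / d) = \<beta> * ((ga i - E) * (p * d / b1) - A * E) + p * p * ga i"
      using eq2 eq1 h1 h2 by simp
    then have "\<beta> = A" by (rule alg[OF Enz pnz dnz b1nz dd])
    then show ?thesis using \<beta> A_def by simp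
  qed
  show ?thesis using dd B by blast
qed

end


definition Pit :: "('m \<Rightarrow> 'm) \<Rightarrow> ('m \<Rightarrow> 'm) \<Rightarrow> int \<Rightarrow> 'm \<Rightarrow> 'm" where
  "Pit S S' i x = (if 0 \<le> i then (S ^^ nat i) x else (S' ^^ nat (- i)) x)"

lemma Pit_0: "Pit S S' 0 x = x" by (simp add: Pit_def)
lemma Pit_up: "0 \<le> i \<Longrightarrow> Pit S S' (i + 1) x = S (Pit S S' i x)"
  by (simp add: Pit_def nat_add_distrib)
lemma Pit_down: "i \<le> 0 \<Longrightarrow> Pit S S' (i - 1) x = S' (Pit S S' i x)"
proof -
  assume "i \<le> 0"
  then have "nat (- (i - 1)) = Suc (nat (- i))" by simp
  then show ?thesis using \<open>i \<le> 0\<close> by (auto simp: Pit_def)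
qed

lemma Pit_inv:
  assumes "\<And>x. x \<in> Q \<Longrightarrow> S x \<in> Q" "\<And>x. x \<in> Q \<Longrightarrow> S' x \<in> Q" "x \<in> Q"
  shows "Pit S S' i x \<in> Q"
proof -
  have "(S ^^ n) x \<in> Q" for n by (induct n) (use assms in auto)
  moreover have "(S' ^^ n) x \<in> Q" for n by (induct n) (use assms in auto)
  ultimately show ?thesis by (simp add: Pit_def)
qed

lemma Pit_comm:
  assumes "\<And>x. R (S x) = S (R x)" "\<And>x. R (S' x) = S' (R x)"
  shows "R (Pit S S' i x) = Pit S S' i (R x)"
proof -
  have "R ((S ^^ n) x) = (S ^^ n) (R x)" for n by (induct n) (use assms in auto)
  moreover have "R ((S' ^^ n) x) = (S' ^^ n) (R x)" for n by (induct n) (use assms in auto)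
  ultimately show ?thesis by (simp add: Pit_def)
qed

context gm
begin

lemma Pit_rel:
  assumes anz: "a \<noteq> 0"
    and lin: "\<And>c x. T (smul c x) = smul c (T x)" "\<And>c x. T' (smul c x) = smul c (T' x)"
    and cl: "\<And>x. x \<in> Q \<Longrightarrow> smul (1/a) (T x) \<in> Q" "\<And>x. x \<in> Q \<Longrightarrow> smul (1/a) (T' x) \<in> Q"
    and inv: "\<And>x. x \<in> Q \<Longrightarrow> T' (T x) = smul (a*a) x \<and> T (T' x) = smul (a*a) x"
    and x: "x \<in> Q"
  shows "T (Pit (\<lambda>x. smul (1/a) (T x)) (\<lambda>x. smul (1/a) (T' x)) i x)
           = smul a (Pit (\<lambda>x. smul (1/a) (T x)) (\<lambda>x. smul (1/a) (T' x)) (i + 1) x)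
      \<and> T' (Pit (\<lambda>x. smul (1/a) (T x)) (\<lambda>x. smul (1/a) (T' x)) i x)
           = smul a (Pit (\<lambda>x. smul (1/a) (T x)) (\<lambda>x. smul (1/a) (T' x)) (i - 1) x)"
proof -
  define S where "S = (\<lambda>x. smul (1/a) (T x))"
  define S' where "S' = (\<lambda>x. smul (1/a) (T' x))"
  have inQ: "Pit S S' j x \<in> Q" for j by (rule Pit_inv) (use cl x in \<open>auto simp: S_def S'_def\<close>)
  have A: "T (Pit S S' i x) = smul a (Pit S S' (i + 1) x)"
  proof (cases "0 \<le> i")
    case True
    then show ?thesis using anz by (simp add: Pit_up S_def sm_assoc sm_one)
  next
    case False
    then have "Pit S S' i x = S' (Pit S S' (i + 1) x)" using Pit_down[of "i+1" S S' x] by simp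
    then show ?thesis using anz inv[OF inQ[of "i+1"]] by (simp add: S'_def lin sm_assoc)
  qed
  have B: "T' (Pit S S' i x) = smul a (Pit S S' (i - 1) x)"
  proof (cases "i \<le> 0")
    case True
    then show ?thesis using anz by (simp add: Pit_down S'_def sm_assoc sm_one)
  next
    case False
    then have "Pit S S' i x = S (Pit S S' (i - 1) x)" using Pit_up[of "i-1" S S' x] by simp
    then show ?thesis using anz inv[OF inQ[of "i-1"]] by (simp add: S_def lin sm_assoc)
  qed
  show ?thesis using A B by (simp add: S_def S'_def)
qed


lemma Pit_mem:
  assumes hS: "\<And>\<theta> x. \<theta> \<in> \<Gamma> \<Longrightarrow> x \<in> Mg \<theta> \<Longrightarrow> S x \<in> Mg (s + \<theta>)"
    and hS': "\<And>\<theta> x. \<theta> \<in> \<Gamma> \<Longrightarrow> x \<in> Mg \<theta> \<Longrightarrow> S' x \<in> Mg (- s + \<theta>)"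
    and s: "s \<in> \<Gamma>" and th: "\<theta> \<in> \<Gamma>" and x: "x \<in> Mg \<theta>"
  shows "Pit S S' i x \<in> Mg (\<theta> + of_int i *s s)"
proof -
  have G: "\<theta> + of_int j *s s \<in> \<Gamma>" for j using Gadd[OF th Gint[OF s]] by simp
  have 1: "(S ^^ n) x \<in> Mg (\<theta> + of_int (int n) *s s)" for n
  proof (induct n)
    case 0
    then show ?case using x by simp
  next
    case (Suc n)
    have "S ((S ^^ n) x) \<in> Mg (s + (\<theta> + of_int (int n) *s s))" by (rule hS[OF G Suc])
    moreover have "s + (\<theta> + of_int (int n) *s s) = \<theta> + of_int (int (Suc n)) *s s"
      by (simp add: vec_eq_iff algebra_simps)
    ultimately show ?case by (metis funpow.simps(2) o_apply)
  qed
  have 2: "(S' ^^ n) x \<in> Mg (\<theta> + of_int (- int n) *s s)" for n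
  proof (induct n)
    case 0
    then show ?case using x by simp
  next
    case (Suc n)
    have "S' ((S' ^^ n) x) \<in> Mg (- s + (\<theta> + of_int (- int n) *s s))" by (rule hS'[OF G Suc])
    moreover have "- s + (\<theta> + of_int (- int n) *s s) = \<theta> + of_int (- int (Suc n)) *s s"
      by (simp add: vec_eq_iff algebra_simps)
    ultimately show ?case by (metis funpow.simps(2) o_apply)
  qed
  show ?thesis
  proof (cases "0 \<le> i")
    case True
    then show ?thesis using 1[of "nat i"] by (simp add: Pit_def)
  next
    case False
    then show ?thesis using 2[of "nat (- i)"] by (simp add: Pit_def)
  qed
qed

end

locale ex = gm \<Gamma> smul Mg act w for \<Gamma> :: "('f::field ^ 3) set" and smul :: "'f \<Rightarrow> 'm::ab_group_add \<Rightarrow> 'm"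
    and Mg act w +
  fixes \<sigma> \<rho> \<nu> d1 :: "'f ^ 3" and a1 b1 :: 'f
  assumes \<sigma>\<Gamma>: "\<sigma> \<in> \<Gamma>" and \<rho>\<Gamma>: "\<rho> \<in> \<Gamma>" and \<nu>\<Gamma>: "\<nu> \<in> \<Gamma>" and snz: "\<sigma> \<noteq> 0" and rnz: "\<rho> \<noteq> 0"
    and s1: "dpair \<sigma> d1 = 0" and r1: "dpair \<rho> d1 = 0"
    and a1nz: "a1 \<noteq> 0" and b1nz: "b1 \<noteq> 0"
    and ha: "act (- \<sigma>) d1 (act \<sigma> d1 (w \<nu>)) = smul (a1 ^ 2) (w \<nu>)"
    and hb: "act (- \<rho>) d1 (act \<rho> d1 (w \<nu>)) = smul (b1 ^ 2) (w \<nu>)"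
begin

lemma fs: "\<sigma> \<in> \<Gamma>" "\<rho> \<in> \<Gamma>" "-\<sigma> \<in> \<Gamma>" "-\<rho> \<in> \<Gamma>" "\<sigma> \<noteq> 0" "\<rho> \<noteq> 0"
  "dpair \<sigma> d1 = 0" "dpair \<rho> d1 = 0" "dpair (-\<sigma>) d1 = 0" "dpair (-\<rho>) d1 = 0"
  using \<sigma>\<Gamma> \<rho>\<Gamma> Gneg snz rnz s1 r1 by (auto simp: dpair_neg1)

abbreviation "Ts \<equiv> act \<sigma> d1"
abbreviation "Ts' \<equiv> act (-\<sigma>) d1"
abbreviation "Tr \<equiv> act \<rho> d1"
abbreviation "Tr' \<equiv> act (-\<rho>) d1"

lemma lins: "Ts (smul c x) = smul c (Ts x)" "Ts' (smul c x) = smul c (Ts' x)"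
  "Tr (smul c x) = smul c (Tr x)" "Tr' (smul c x) = smul c (Tr' x)"
  using fs by (simp_all add: act_sm)

lemma comms: "Ts (Ts' x) = Ts' (Ts x)" "Ts (Tr x) = Tr (Ts x)" "Ts (Tr' x) = Tr' (Ts x)"
  "Ts' (Tr x) = Tr (Ts' x)" "Ts' (Tr' x) = Tr' (Ts' x)" "Tr (Tr' x) = Tr' (Tr x)"
  using fs by (simp_all add: comm1)

definition "Q = {x. x \<noteq> 0 \<and> Ts' (Ts x) = smul (a1*a1) x \<and> Ts (Ts' x) = smul (a1*a1) x
   \<and> Tr' (Tr x) = smul (b1*b1) x \<and> Tr (Tr' x) = smul (b1*b1) x}"

lemma Qcl:
  assumes U: "U = Ts \<or> U = Ts' \<or> U = Tr \<or> U = Tr'" and t: "t \<noteq> 0" and x: "x \<in> Q"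
  shows "smul t (U x) \<in> Q"
proof -
  have linU: "U (smul c y) = smul c (U y)" for c y using U lins by auto
  have cU: "Ts (U y) = U (Ts y)" "Ts' (U y) = U (Ts' y)" "Tr (U y) = U (Tr y)" "Tr' (U y) = U (Tr' y)" for y
    using U comms by auto
  have xq: "Ts' (Ts x) = smul (a1*a1) x" "Ts (Ts' x) = smul (a1*a1) x" "Tr' (Tr x) = smul (b1*b1) x" "Tr (Tr' x) = smul (b1*b1) x" "x \<noteq> 0"
    using x by (auto simp: Q_def)
  obtain V c where V: "V (U x) = smul c x" "c \<noteq> 0" "V 0 = 0"
    using U xq a1nz b1nz fs by (auto simp: act_zero)
  have nz: "U x \<noteq> 0"
  proof
    assume "U x = 0"
    then have "smul c x = 0" using V by metis
    then show False using V(2) xq(5) by (simp add: sm_eq0)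
  qed
  have X: "X (Y x) = smul e x \<Longrightarrow> (\<And>y. X (U y) = U (X y)) \<Longrightarrow> (\<And>y. Y (U y) = U (Y y)) \<Longrightarrow>
     (\<And>c y. X (smul c y) = smul c (X y)) \<Longrightarrow> (\<And>c y. Y (smul c y) = smul c (Y y)) \<Longrightarrow>
     X (Y (smul t (U x))) = smul e (smul t (U x))" for X Y e
    by (simp add: linU sm_assoc mult.commute)
  show ?thesis unfolding Q_def
    using nz t xq X[of Ts' Ts] X[of Ts Ts'] X[of Tr' Tr] X[of Tr Tr'] cU lins
    by (simp add: sm_eq0)
qed


definition "Ss x = smul (1/a1) (Ts x)"
definition "Ss' x = smul (1/a1) (Ts' x)"
definition "Sr x = smul (1/b1) (Tr x)"
definition "Sr' x = smul (1/b1) (Tr' x)"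

lemma Qcls: "x \<in> Q \<Longrightarrow> Ss x \<in> Q" "x \<in> Q \<Longrightarrow> Ss' x \<in> Q" "x \<in> Q \<Longrightarrow> Sr x \<in> Q" "x \<in> Q \<Longrightarrow> Sr' x \<in> Q"
  unfolding Ss_def Ss'_def Sr_def Sr'_def using Qcl a1nz b1nz by auto

lemma wQ: "w \<nu> \<in> Q"
  using basis \<nu>\<Gamma> ha hb comms(1,6) unfolding Q_def by (auto simp: power2_eq_square)

definition "u k = Pit Sr Sr' k (w \<nu>)"
definition "vv i k = Pit Ss Ss' i (u k)"

lemma uQ: "u k \<in> Q" unfolding u_def by (rule Pit_inv) (use Qcls wQ in auto)
lemma vvQ: "vv i k \<in> Q" unfolding vv_def by (rule Pit_inv) (use Qcls uQ in auto)

lemma Qinv: "x \<in> Q \<Longrightarrow> Ts' (Ts x) = smul (a1*a1) x \<and> Ts (Ts' x) = smul (a1*a1) x"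
   "x \<in> Q \<Longrightarrow> Tr' (Tr x) = smul (b1*b1) x \<and> Tr (Tr' x) = smul (b1*b1) x"
  unfolding Q_def by auto

lemma relS: "Ts (vv i k) = smul a1 (vv (i + 1) k) \<and> Ts' (vv i k) = smul a1 (vv (i - 1) k)"
  unfolding vv_def Ss_def Ss'_def
  by (rule Pit_rel[OF a1nz lins(1,2) _ _ Qinv(1) uQ]) (use Qcls in \<open>auto simp: Ss_def Ss'_def\<close>)

lemma relR0: "Tr (u k) = smul b1 (u (k + 1)) \<and> Tr' (u k) = smul b1 (u (k - 1))"
  unfolding u_def Sr_def Sr'_def
  by (rule Pit_rel[OF b1nz lins(3,4) _ _ Qinv(2) wQ]) (use Qcls in \<open>auto simp: Sr_def Sr'_def\<close>)

lemma commR: "Tr (vv i k) = Pit Ss Ss' i (Tr (u k))" "Tr' (vv i k) = Pit Ss Ss' i (Tr' (u k))"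
  unfolding vv_def by (rule Pit_comm; simp add: Ss_def Ss'_def lins comms)+

lemma commsm: "smul c (Pit Ss Ss' i x) = Pit Ss Ss' i (smul c x)"
  by (rule Pit_comm; simp add: Ss_def Ss'_def lins sm_assoc mult.commute)

lemma relR: "Tr (vv i k) = smul b1 (vv i (k + 1)) \<and> Tr' (vv i k) = smul b1 (vv i (k - 1))"
  using commR relR0 commsm unfolding vv_def by simp

lemma memS: "\<alpha> \<in> \<Gamma> \<Longrightarrow> \<alpha> \<noteq> 0 \<Longrightarrow> dpair \<alpha> d1 = 0 \<Longrightarrow> \<theta> \<in> \<Gamma> \<Longrightarrow> x \<in> Mg \<theta> \<Longrightarrow> smul c (act \<alpha> d1 x) \<in> Mg (\<alpha> + \<theta>)"
  using Mg_sm[OF Gadd grade] by blast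

lemma memu: "u k \<in> Mg (\<nu> + of_int k *s \<rho>)"
  unfolding u_def
proof (rule Pit_mem)
  show "Sr x \<in> Mg (\<rho> + \<theta>)" if "\<theta> \<in> \<Gamma>" "x \<in> Mg \<theta>" for \<theta> x
    unfolding Sr_def by (rule memS) (use fs that in auto)
  show "Sr' x \<in> Mg (- \<rho> + \<theta>)" if "\<theta> \<in> \<Gamma>" "x \<in> Mg \<theta>" for \<theta> x
    unfolding Sr'_def by (rule memS) (use fs that in auto)
  show "\<rho> \<in> \<Gamma>" "\<nu> \<in> \<Gamma>" using fs \<nu>\<Gamma> by auto
  have "w \<nu> = smul 1 (w \<nu>)" by (simp add: sm_one)
  then show "w \<nu> \<in> Mg \<nu>" using basis \<nu>\<Gamma> by blast
qed

lemma memv: "vv i k \<in> Mg (\<nu> + of_int i *s \<sigma> + of_int k *s \<rho>)"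
proof -
  have G: "\<nu> + of_int k *s \<rho> \<in> \<Gamma>" using Gadd[OF \<nu>\<Gamma> Gint[OF \<rho>\<Gamma>]] .
  have "vv i k \<in> Mg ((\<nu> + of_int k *s \<rho>) + of_int i *s \<sigma>)"
    unfolding vv_def
  proof (rule Pit_mem)
    show "Ss x \<in> Mg (\<sigma> + \<theta>)" if "\<theta> \<in> \<Gamma>" "x \<in> Mg \<theta>" for \<theta> x
      unfolding Ss_def by (rule memS) (use fs that in auto)
    show "Ss' x \<in> Mg (- \<sigma> + \<theta>)" if "\<theta> \<in> \<Gamma>" "x \<in> Mg \<theta>" for \<theta> x
      unfolding Ss'_def by (rule memS) (use fs that in auto)
  qed (use fs memu G in auto)
  moreover have "(\<nu> + of_int k *s \<rho>) + of_int i *s \<sigma> = \<nu> + of_int i *s \<sigma> + of_int k *s \<rho>"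
    by (simp add: algebra_simps)
  ultimately show ?thesis by metis
qed

theorem exist: "\<exists>v. (\<forall>i k. v i k \<in> Mg (\<nu> + of_int i *s \<sigma> + of_int k *s \<rho>) \<and> v i k \<noteq> 0) \<and>
        (\<forall>i k. act \<sigma> d1 (v i k) = smul a1 (v (i + 1) k) \<and>
               act (- \<sigma>) d1 (v i k) = smul a1 (v (i - 1) k) \<and>
               act \<rho> d1 (v i k) = smul b1 (v i (k + 1)) \<and>
               act (- \<rho>) d1 (v i k) = smul b1 (v i (k - 1)))"
  apply (rule exI[of _ vv])
  using memv vvQ relS relR unfolding Q_def by blast

end


lemma cramer:
  fixes M1 M2 N1 N2 L1 L2 :: "'a::field"
  assumes "M1*L1 + M2*L2 = 0" "N1*L1 + N2*L2 = 0" "M1*N2 - M2*N1 \<noteq> 0"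
  shows "L1 = 0 \<and> L2 = 0"
proof -
  have "(M1*N2 - M2*N1)*L1 = N2*(M1*L1 + M2*L2) - M2*(N1*L1 + N2*L2)" by (simp add: algebra_simps)
  then have 1: "(M1*N2 - M2*N1)*L1 = 0" using assms by simp
  have "(M1*N2 - M2*N1)*L2 = M1*(N1*L1 + N2*L2) - N1*(M1*L1 + M2*L2)" by (simp add: algebra_simps)
  then have 2: "(M1*N2 - M2*N1)*L2 = 0" using assms by simp
  show ?thesis using 1 2 assms(3) by simp
qed

lemma exists_perp:
  fixes d1 x g \<sigma> \<rho> :: "'f::field ^ 3"
  assumes "d1 \<noteq> 0" "dpair \<sigma> d1 = 0" "dpair \<rho> d1 = 0" "dpair \<sigma> x = 0" "dpair \<rho> x = 0"
    "x \<notin> {c *s d1 | c. True}"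
  shows "\<exists>d. d \<noteq> 0 \<and> dpair \<sigma> d = 0 \<and> dpair \<rho> d = 0 \<and> dpair g d = 0"
proof (cases "dpair g x = 0 \<and> dpair g d1 = 0")
  case True
  then show ?thesis using assms by blast
next
  case False
  define d where "d = dpair g x *s d1 - dpair g d1 *s x"
  have "d \<noteq> 0"
  proof
    assume d0: "d = 0"
    show False
    proof (cases "dpair g d1 = 0")
      case True
      then have "dpair g x \<noteq> 0" using False by blast
      then show False using d0 True assms(1) by (simp add: d_def vec_eq_iff)
    next
      case F: False
      have "x = (dpair g x / dpair g d1) *s d1"
        using d0 F by (simp add: d_def vec_eq_iff field_simps eq_diff_eq)
      then show False using assms(6) by blast
    qed
  qed
  moreover have "dpair \<sigma> d = 0 \<and> dpair \<rho> d = 0 \<and> dpair g d = 0"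
    using assms by (simp add: d_def dpair_simps)
  ultimately show ?thesis by blast
qed

lemma ndeg:
  fixes \<Gamma> :: "('f::field_char_0 ^ 3) set"
  assumes lattice: "is_Z3_lattice \<Gamma>"
    and ker_trivial: "\<forall>d. (\<forall>\<alpha>\<in>\<Gamma>. dpair \<alpha> d = 0) \<longrightarrow> d = 0"
    and \<sigma>\<Gamma>: "\<sigma> \<in> \<Gamma>" and \<rho>\<Gamma>: "\<rho> \<in> \<Gamma>"
    and indep: "\<forall>i k :: int. of_int i *s \<sigma> + of_int k *s \<rho> = 0 \<longrightarrow> i = 0 \<and> k = 0"
    and h: "d1 \<noteq> 0" "dpair \<sigma> d1 = 0" "dpair \<rho> d1 = 0" "dpair \<sigma> x = 0" "dpair \<rho> x = 0"
    "x \<notin> {c *s d1 | c. True}"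
  shows False
proof -
  obtain g1 g2 g3 where G: "\<Gamma> = {of_int i *s g1 + of_int j *s g2 + of_int k *s g3 | i j k. True}"
    using lattice unfolding is_Z3_lattice_def by blast
  obtain m1 m2 m3 :: int where m: "\<sigma> = of_int m1 *s g1 + of_int m2 *s g2 + of_int m3 *s g3"
    using \<sigma>\<Gamma> G by blast
  obtain n1 n2 n3 :: int where n: "\<rho> = of_int n1 *s g1 + of_int n2 *s g2 + of_int n3 *s g3"
    using \<rho>\<Gamma> G by blast
  have comb: "of_int a *s \<sigma> + of_int b *s \<rho> = of_int (a*m1 + b*n1) *s g1 + of_int (a*m2 + b*n2) *s g2 + of_int (a*m3 + b*n3) *s g3" for a b
    unfolding m n by (simp add: vec_eq_iff algebra_simps)
  have cz: "m2*n3 - m3*n2 \<noteq> 0 \<or> m3*n1 - m1*n3 \<noteq> 0 \<or> m1*n2 - m2*n1 \<noteq> 0"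
  proof (rule ccontr)
    assume "\<not> ?thesis"
    then have c: "m2*n3 = m3*n2" "m3*n1 = m1*n3" "m1*n2 = m2*n1" by auto
    have s0: "\<sigma> \<noteq> 0" using indep[rule_format, of 1 0] by auto
    then have "m1 \<noteq> 0 \<or> m2 \<noteq> 0 \<or> m3 \<noteq> 0" using m by auto
    then obtain a b :: int where ab: "b \<noteq> 0" "a*m1 + b*n1 = 0" "a*m2 + b*n2 = 0" "a*m3 + b*n3 = 0"
    proof (cases "m1 \<noteq> 0")
      case True
      show ?thesis using True c by (intro that[where a=n1 and b="-m1"]) (auto simp: algebra_simps)
    next
      case F1: False
      show ?thesis
      proof (cases "m2 \<noteq> 0")
        case True
        show ?thesis using True c by (intro that[where a=n2 and b="-m2"]) (auto simp: algebra_simps)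
      next
        case F2: False
        then have "m3 \<noteq> 0" using F1 \<open>m1 \<noteq> 0 \<or> m2 \<noteq> 0 \<or> m3 \<noteq> 0\<close> by auto
        show ?thesis using \<open>m3 \<noteq> 0\<close> c by (intro that[where a=n3 and b="-m3"]) (auto simp: algebra_simps)
      qed
    qed
    have "of_int a *s \<sigma> + of_int b *s \<rho> = 0" using comb[of a b] ab by simp
    then show False using indep ab(1) by blast
  qed
  have Lall: "dpair g1 d = 0 \<and> dpair g2 d = 0 \<and> dpair g3 d = 0"
    if d: "dpair \<sigma> d = 0" "dpair \<rho> d = 0" and j: "(m2*n3 - m3*n2 \<noteq> 0 \<and> dpair g1 d = 0) \<or>
        (m3*n1 - m1*n3 \<noteq> 0 \<and> dpair g2 d = 0) \<or> (m1*n2 - m2*n1 \<noteq> 0 \<and> dpair g3 d = 0)" for d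
  proof -
    have eS: "of_int m1 * dpair g1 d + of_int m2 * dpair g2 d + of_int m3 * dpair g3 d = 0"
      using d(1) unfolding m by (simp add: dpair_simps)
    have eR: "of_int n1 * dpair g1 d + of_int n2 * dpair g2 d + of_int n3 * dpair g3 d = 0"
      using d(2) unfolding n by (simp add: dpair_simps)
    have oi: "(of_int (a::int) :: 'f) \<noteq> 0" if "a \<noteq> 0" for a using that by simp
    from j show ?thesis
    proof (elim disjE conjE)
      assume c: "m2*n3 - m3*n2 \<noteq> 0" and L: "dpair g1 d = 0"
      have "(of_int m2 :: 'f) * of_int n3 - of_int m3 * of_int n2 \<noteq> 0" using oi[OF c] by simp
      then show ?thesis using cramer[of "of_int m2" "dpair g2 d" "of_int m3" "dpair g3 d" "of_int n2" "of_int n3"] eS eR L by simp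
    next
      assume c: "m3*n1 - m1*n3 \<noteq> 0" and L: "dpair g2 d = 0"
      have "(of_int m1 :: 'f) * of_int n3 - of_int m3 * of_int n1 \<noteq> 0" using oi[OF c] by (simp add: algebra_simps)
      then show ?thesis using cramer[of "of_int m1" "dpair g1 d" "of_int m3" "dpair g3 d" "of_int n1" "of_int n3"] eS eR L by simp
    next
      assume c: "m1*n2 - m2*n1 \<noteq> 0" and L: "dpair g3 d = 0"
      have "(of_int m1 :: 'f) * of_int n2 - of_int m2 * of_int n1 \<noteq> 0" using oi[OF c] by simp
      then show ?thesis using cramer[of "of_int m1" "dpair g1 d" "of_int m2" "dpair g2 d" "of_int n1" "of_int n2"] eS eR L by simp
    qed
  qed
  obtain g where gj: "(m2*n3 - m3*n2 \<noteq> 0 \<and> g = g1) \<or> (m3*n1 - m1*n3 \<noteq> 0 \<and> g = g2) \<or> (m1*n2 - m2*n1 \<noteq> 0 \<and> g = g3)"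
    using cz by blast
  obtain d where d: "d \<noteq> 0" "dpair \<sigma> d = 0" "dpair \<rho> d = 0" "dpair g d = 0"
    using exists_perp[OF h] by blast
  have L: "dpair g1 d = 0 \<and> dpair g2 d = 0 \<and> dpair g3 d = 0"
    using Lall[OF d(2,3)] gj d(4) by blast
  have "\<forall>\<alpha>\<in>\<Gamma>. dpair \<alpha> d = 0"
  proof
    fix \<alpha> assume "\<alpha> \<in> \<Gamma>"
    then obtain i j k :: int where "\<alpha> = of_int i *s g1 + of_int j *s g2 + of_int k *s g3" using G by blast
    then show "dpair \<alpha> d = 0" using L by (simp add: dpair_simps)
  qed
  then show False using ker_trivial d(1) by blast
qed

theorem lemma3p2:
  fixes \<Gamma> :: "('f::{alg_closed_field, field_char_0} ^ 3) set"
    and smul :: "'f \<Rightarrow> 'm::ab_group_add \<Rightarrow> 'm"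
    and Mg :: "'f ^ 3 \<Rightarrow> 'm set"
    and act :: "'f ^ 3 \<Rightarrow> 'f ^ 3 \<Rightarrow> 'm \<Rightarrow> 'm"
    and w :: "'f ^ 3 \<Rightarrow> 'm"
    and \<sigma> \<rho> \<nu> d1 d2 d3 :: "'f ^ 3"
    and a1 b1 :: 'f
  assumes lattice: "is_Z3_lattice \<Gamma>"
    and ker_trivial: "\<forall>d. (\<forall>\<alpha>\<in>\<Gamma>. dpair \<alpha> d = 0) \<longrightarrow> d = 0"
    and module: "graded_S_module \<Gamma> smul Mg act"
    and dim1: "\<forall>\<theta>\<in>\<Gamma>. vector_space.dim smul (Mg \<theta>) = 1"
    and basis: "\<forall>\<theta>\<in>\<Gamma>. w \<theta> \<noteq> 0 \<and> Mg \<theta> = {smul c (w \<theta>) | c. True}"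
    and \<sigma>\<Gamma>: "\<sigma> \<in> \<Gamma>" and \<rho>\<Gamma>: "\<rho> \<in> \<Gamma>"
    and indep: "\<forall>i k :: int. of_int i *s \<sigma> + of_int k *s \<rho> = 0 \<longrightarrow> i = 0 \<and> k = 0"
    and d1: "d1 \<noteq> 0" "dpair \<sigma> d1 = 0" "dpair \<rho> d1 = 0"
    and d2: "dpair \<sigma> d2 = 0" "d2 \<notin> {c *s d1 | c. True}"
    and d3: "dpair \<rho> d3 = 0" "d3 \<notin> {c *s d1 | c. True}"
    and \<nu>\<Gamma>: "\<nu> \<in> \<Gamma>"
    and nz\<sigma>: "act (- \<sigma>) d1 (act \<sigma> d1 (w \<nu>)) \<noteq> 0"
    and nz\<rho>: "act (- \<rho>) d1 (act \<rho> d1 (w \<nu>)) \<noteq> 0"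
    and a1: "a1 \<noteq> 0" "act (- \<sigma>) d1 (act \<sigma> d1 (w \<nu>)) = smul (a1 ^ 2) (w \<nu>)"
    and b1: "b1 \<noteq> 0" "act (- \<rho>) d1 (act \<rho> d1 (w \<nu>)) = smul (b1 ^ 2) (w \<nu>)"
  shows
    "(\<exists>v :: int \<Rightarrow> int \<Rightarrow> 'm.
        (\<forall>i k. v i k \<in> Mg (\<nu> + of_int i *s \<sigma> + of_int k *s \<rho>) \<and> v i k \<noteq> 0) \<and>
        (\<forall>i k. act \<sigma> d1 (v i k) = smul a1 (v (i + 1) k) \<and>
               act (- \<sigma>) d1 (v i k) = smul a1 (v (i - 1) k) \<and>
               act \<rho> d1 (v i k) = smul b1 (v i (k + 1)) \<and>
               act (- \<rho>) d1 (v i k) = smul b1 (v i (k - 1)))) \<and>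
     (\<forall>(v :: int \<Rightarrow> int \<Rightarrow> 'm) a2 a3 d.
        (\<forall>i k. v i k \<in> Mg (\<nu> + of_int i *s \<sigma> + of_int k *s \<rho>) \<and> v i k \<noteq> 0) \<longrightarrow>
        (\<forall>i k. act \<sigma> d1 (v i k) = smul a1 (v (i + 1) k) \<and>
               act (- \<sigma>) d1 (v i k) = smul a1 (v (i - 1) k) \<and>
               act \<rho> d1 (v i k) = smul b1 (v i (k + 1)) \<and>
               act (- \<rho>) d1 (v i k) = smul b1 (v i (k - 1))) \<longrightarrow>
        act \<sigma> d2 (v 0 0) = smul a2 (v 1 0) \<longrightarrow>
        act \<rho> d3 (v 0 0) = smul a3 (v 0 1) \<longrightarrow>
        act (\<sigma> + \<rho>) d1 (v 0 0) = smul d (v 1 1) \<longrightarrow>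
        (\<forall>i k.
           act (\<sigma> + \<rho>) d1 (v i k) = smul d (v (i + 1) (k + 1)) \<and>
           act \<sigma> d2 (v i k) = smul (a2 + of_int k * dpair \<rho> d2 * d / b1) (v (i + 1) k) \<and>
           act (- \<sigma>) d2 (v i k) = smul (a2 + of_int k * dpair \<rho> d2 * d / b1) (v (i - 1) k) \<and>
           act \<rho> d3 (v i k) = smul (a3 + of_int i * dpair \<sigma> d3 * d / a1) (v i (k + 1)) \<and>
           act (- \<rho>) d3 (v i k) = smul (a3 + of_int i * dpair \<sigma> d3 * d / a1) (v i (k - 1))) \<and>
        a1 ^ 2 = b1 ^ 2 \<and> b1 ^ 2 = d ^ 2)"
  proof -
  obtain g1 g2 g3 where G: "\<Gamma> = {of_int i *s g1 + of_int j *s g2 + of_int k *s g3 | i j k. True}"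
    using lattice unfolding is_Z3_lattice_def by blast
  have Gadd: "x + y \<in> \<Gamma>" if hxy: "x \<in> \<Gamma>" "y \<in> \<Gamma>" for x y
  proof -
    obtain i j k :: int where x: "x = of_int i *s g1 + of_int j *s g2 + of_int k *s g3" using hxy G by blast
    obtain i' j' k' :: int where y: "y = of_int i' *s g1 + of_int j' *s g2 + of_int k' *s g3" using hxy G by blast
    have "x + y = of_int (i+i') *s g1 + of_int (j+j') *s g2 + of_int (k+k') *s g3"
      unfolding x y by (simp add: vec_eq_iff algebra_simps)
    then show ?thesis using G by blast
  qed
  have Gneg: "- x \<in> \<Gamma>" if hx: "x \<in> \<Gamma>" for x
  proof -
    obtain i j k :: int where x: "x = of_int i *s g1 + of_int j *s g2 + of_int k *s g3" using hx G by blast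
    have "- x = of_int (-i) *s g1 + of_int (-j) *s g2 + of_int (-k) *s g3"
      unfolding x by (simp add: vec_eq_iff algebra_simps)
    then show ?thesis using G by blast
  qed
  have gmI: "gm \<Gamma> smul Mg act w" using module basis Gadd Gneg by (unfold_locales) auto
  interpret gm \<Gamma> smul Mg act w by (rule gmI)
  have snz: "\<sigma> \<noteq> 0" using indep[rule_format, of 1 0] by auto
  have rnz: "\<rho> \<noteq> 0" using indep[rule_format, of 0 1] by auto
  have exI': "ex \<Gamma> smul Mg act w \<sigma> \<rho> \<nu> d1 a1 b1"
    unfolding ex_def ex_axioms_def using gmI \<sigma>\<Gamma> \<rho>\<Gamma> \<nu>\<Gamma> snz rnz d1 a1 b1 by blast
  have part1: "\<exists>v :: int \<Rightarrow> int \<Rightarrow> 'm.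
        (\<forall>i k. v i k \<in> Mg (\<nu> + of_int i *s \<sigma> + of_int k *s \<rho>) \<and> v i k \<noteq> 0) \<and>
        (\<forall>i k. act \<sigma> d1 (v i k) = smul a1 (v (i + 1) k) \<and>
               act (- \<sigma>) d1 (v i k) = smul a1 (v (i - 1) k) \<and>
               act \<rho> d1 (v i k) = smul b1 (v i (k + 1)) \<and>
               act (- \<rho>) d1 (v i k) = smul b1 (v i (k - 1)))"
    by (rule ex.exist[OF exI'])
  have pnz: "dpair \<rho> d2 \<noteq> 0"
  proof
    assume "dpair \<rho> d2 = 0"
    then show False using ndeg[OF lattice ker_trivial \<sigma>\<Gamma> \<rho>\<Gamma> indep d1 d2(1) _ d2(2)] by blast
  qed
  have qnz: "dpair \<sigma> d3 \<noteq> 0"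
  proof
    assume "dpair \<sigma> d3 = 0"
    then show False using ndeg[OF lattice ker_trivial \<sigma>\<Gamma> \<rho>\<Gamma> indep d1 _ d3(1) d3(2)] by blast
  qed
  have indep': "\<forall>i k :: int. of_int i *s \<rho> + of_int k *s \<sigma> = 0 \<longrightarrow> i = 0 \<and> k = 0"
    using indep by (metis add.commute)
  have part2: "(\<forall>i k. act (\<sigma> + \<rho>) d1 (v i k) = smul d (v (i + 1) (k + 1)) \<and>
           act \<sigma> d2 (v i k) = smul (a2 + of_int k * dpair \<rho> d2 * d / b1) (v (i + 1) k) \<and>
           act (- \<sigma>) d2 (v i k) = smul (a2 + of_int k * dpair \<rho> d2 * d / b1) (v (i - 1) k) \<and>
           act \<rho> d3 (v i k) = smul (a3 + of_int i * dpair \<sigma> d3 * d / a1) (v i (k + 1)) \<and>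
           act (- \<rho>) d3 (v i k) = smul (a3 + of_int i * dpair \<sigma> d3 * d / a1) (v i (k - 1))) \<and>
        a1 ^ 2 = b1 ^ 2 \<and> b1 ^ 2 = d ^ 2"
    if vm: "\<forall>i k. v i k \<in> Mg (\<nu> + of_int i *s \<sigma> + of_int k *s \<rho>) \<and> v i k \<noteq> 0"
      and vr: "\<forall>i k. act \<sigma> d1 (v i k) = smul a1 (v (i + 1) k) \<and>
               act (- \<sigma>) d1 (v i k) = smul a1 (v (i - 1) k) \<and>
               act \<rho> d1 (v i k) = smul b1 (v i (k + 1)) \<and>
               act (- \<rho>) d1 (v i k) = smul b1 (v i (k - 1))"
      and b2: "act \<sigma> d2 (v 0 0) = smul a2 (v 1 0)"
      and b3: "act \<rho> d3 (v 0 0) = smul a3 (v 0 1)"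
      and bd: "act (\<sigma> + \<rho>) d1 (v 0 0) = smul d (v 1 1)"
    for v :: "int \<Rightarrow> int \<Rightarrow> 'm" and a2 a3 d
  proof -
    have F1I: "fam \<Gamma> smul Mg act w \<sigma> \<rho> \<nu> d1 d2 d3 a1 b1 v d a2"
      unfolding fam_def fam_axioms_def
      using gmI \<sigma>\<Gamma> \<rho>\<Gamma> \<nu>\<Gamma> indep d1 d2 d3 pnz qnz a1 b1 vm vr b2 bd by blast
    have vm': "\<forall>i k. v k i \<in> Mg (\<nu> + of_int i *s \<rho> + of_int k *s \<sigma>) \<and> v k i \<noteq> 0"
    proof (intro allI)
      fix i k
      have "\<nu> + of_int i *s \<rho> + of_int k *s \<sigma> = \<nu> + of_int k *s \<sigma> + of_int i *s \<rho>"
        by (simp add: algebra_simps)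
      then show "v k i \<in> Mg (\<nu> + of_int i *s \<rho> + of_int k *s \<sigma>) \<and> v k i \<noteq> 0" using vm by metis
    qed
    have bd': "act (\<rho> + \<sigma>) d1 (v 0 0) = smul d (v 1 1)" using bd by (simp add: add.commute)
    have F2I: "fam \<Gamma> smul Mg act w \<rho> \<sigma> \<nu> d1 d3 d2 b1 a1 (\<lambda>i k. v k i) d a3"
      unfolding fam_def fam_axioms_def
      using gmI \<sigma>\<Gamma> \<rho>\<Gamma> \<nu>\<Gamma> indep' d1 d2 d3 pnz qnz a1 b1 vm' vr b3 bd' by auto
    have A1: "act \<sigma> d2 (v i k) = smul (a2 + of_int k * dpair \<rho> d2 * d / b1) (v (i + 1) k)" for i k
      using fam.Afwd[OF F1I] by blast
    have A2: "act \<rho> d3 (v i k) = smul (a3 + of_int i * dpair \<sigma> d3 * d / a1) (v i (k + 1))" for i k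
      using fam.Afwd[OF F2I, of i k] by simp
    have T: "act (\<sigma> + \<rho>) d1 (v i k) = smul d (v (i + 1) (k + 1))" for i k
      using fam.Tsr[OF F1I] by blast
    have L1: "d * d = b1 * b1 \<and> (\<forall>i k. act (- \<sigma>) d2 (v i k) = smul (a2 + of_int k * dpair \<rho> d2 * d / b1) (v (i - 1) k))"
      by (rule fam.L3[OF F1I]) (rule A2)
    have L2: "d * d = a1 * a1 \<and> (\<forall>i k. act (- \<rho>) d3 (v k i) = smul (a3 + of_int k * dpair \<sigma> d3 * d / a1) (v k (i - 1)))"
      by (rule fam.L3[OF F2I]) (simp add: A1)
    show ?thesis using A1 A2 T L1 L2 by (simp add: power2_eq_square)
  qed
  show ?thesis using part1 part2 by blast
qed

end
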